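(* Let $(G,\mathcal{T},(A^\circ,B^\circ),k)$ be a Terminal Separation instance, let $\mathcal{T}'$ be the set of terminal pairs disjoint from $A^\circ\cup B^\circ$, and let $\{s,t\}\in\mathcal{T}'$. Suppose $(A_s,B_t)$ and $(A_s',B_t')$ are maximal terminal separations, each of minimum cost among terminal separations extending $(A^\circ\cup\{s\},B^\circ\cup\{t\})$, and that neither of them contains in the union of its two sides any terminal pair of $\mathcal{T}'$ other than $\{s,t\}$. Then (a) $d(A_s)=d(A_s')$ and $d(B_t)=d(B_t')$; (b) $(A_s\cap A_s',B_t\cup B_t')$ and $(A_s\cup A_s',B_t\cap B_t')$ are also terminal separations of minimum cost among separations extending $(A^\circ\cup\{s\},B^\circ\cup\{t\})$; (c) $A_s\cup B_t=A_s'\cup B_t'$.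
   Context: Graphs may have multiple edges but no loops; $d(X)$ is the number of edges with exactly one endpoint in $X$. For a family $\mathcal{T}$ of pairwise disjoint vertex pairs (terminals are their vertices), a terminal separation is a pair $(A,B)$ of disjoint vertex sets such that each pair in $\mathcal{T}$ either has one vertex in $A$ and one in $B$ or is disjoint from $A\cup B$; $(A',B')$ extends $(A,B)$ if $A\subseteq A'$, $B\subseteq B'$; cost $c(A,B)=(d(A)+d(B))/2$; a terminal separation is maximal if every other terminal separation extending it has strictly larger cost. A Terminal Separation instance $(G,\mathcal{T},(A^\circ,B^\circ),k)$ has every terminal of degree at most one and $(A^\circ,B^\circ)$ a terminal separation. *)

theory Defs
  imports Complex_Main
begin

text \<open>A multigraph without loops: vertex set V, edge set E (edges are distinct
objects, so parallel edges are allowed), ends e = the two endpoints of e.\<close>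
definition multigraph :: "'a set \<Rightarrow> 'e set \<Rightarrow> ('e \<Rightarrow> 'a set) \<Rightarrow> bool" where
  "multigraph V E ends \<longleftrightarrow> finite V \<and> finite E \<and>
     (\<forall>e\<in>E. ends e \<subseteq> V \<and> card (ends e) = 2)"

definition dcut :: "'e set \<Rightarrow> ('e \<Rightarrow> 'a set) \<Rightarrow> 'a set \<Rightarrow> nat" where
  "dcut E ends X = card {e\<in>E. card (ends e \<inter> X) = 1}"

definition degree :: "'e set \<Rightarrow> ('e \<Rightarrow> 'a set) \<Rightarrow> 'a \<Rightarrow> nat" where
  "degree E ends v = card {e\<in>E. v \<in> ends e}"

definition pair_family :: "'a set \<Rightarrow> 'a set set \<Rightarrow> bool" where
  "pair_family V T \<longleftrightarrow> (\<forall>p\<in>T. p \<subseteq> V \<and> card p = 2) \<and>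
     (\<forall>p\<in>T. \<forall>q\<in>T. p \<noteq> q \<longrightarrow> p \<inter> q = {})"

definition terminals :: "'a set set \<Rightarrow> 'a set" where
  "terminals T = \<Union>T"

definition term_sep :: "'a set \<Rightarrow> 'a set set \<Rightarrow> 'a set \<Rightarrow> 'a set \<Rightarrow> bool" where
  "term_sep V T A B \<longleftrightarrow> A \<subseteq> V \<and> B \<subseteq> V \<and> A \<inter> B = {} \<and>
     (\<forall>p\<in>T. (card (p \<inter> A) = 1 \<and> card (p \<inter> B) = 1) \<or> p \<inter> (A \<union> B) = {})"

definition extends :: "'a set \<Rightarrow> 'a set \<Rightarrow> 'a set \<Rightarrow> 'a set \<Rightarrow> bool" where
  "extends A B A' B' \<longleftrightarrow> A \<subseteq> A' \<and> B \<subseteq> B'"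

definition cost :: "'e set \<Rightarrow> ('e \<Rightarrow> 'a set) \<Rightarrow> 'a set \<Rightarrow> 'a set \<Rightarrow> real" where
  "cost E ends A B = (real (dcut E ends A) + real (dcut E ends B)) / 2"

definition maximal_sep ::
  "'a set \<Rightarrow> 'e set \<Rightarrow> ('e \<Rightarrow> 'a set) \<Rightarrow> 'a set set \<Rightarrow> 'a set \<Rightarrow> 'a set \<Rightarrow> bool" where
  "maximal_sep V E ends T A B \<longleftrightarrow> term_sep V T A B \<and>
     (\<forall>A' B'. term_sep V T A' B' \<and> extends A B A' B' \<and> (A', B') \<noteq> (A, B)
        \<longrightarrow> cost E ends A' B' > cost E ends A B)"

definition min_ext_sep ::
  "'a set \<Rightarrow> 'e set \<Rightarrow> ('e \<Rightarrow> 'a set) \<Rightarrow> 'a set set \<Rightarrow> 'a set \<Rightarrow> 'a set \<Rightarrow> 'a set \<Rightarrow> 'a set \<Rightarrow> bool" where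
  "min_ext_sep V E ends T A0 B0 A B \<longleftrightarrow> term_sep V T A B \<and> extends A0 B0 A B \<and>
     (\<forall>A' B'. term_sep V T A' B' \<and> extends A0 B0 A' B' \<longrightarrow> cost E ends A B \<le> cost E ends A' B')"

definition ts_instance ::
  "'a set \<Rightarrow> 'e set \<Rightarrow> ('e \<Rightarrow> 'a set) \<Rightarrow> 'a set set \<Rightarrow> 'a set \<Rightarrow> 'a set \<Rightarrow> nat \<Rightarrow> bool" where
  "ts_instance V E ends T A0 B0 k \<longleftrightarrow> multigraph V E ends \<and> pair_family V T \<and>
     (\<forall>v\<in>terminals T. degree E ends v \<le> 1) \<and> term_sep V T A0 B0"

end

theory Submission
  imports Defs
begin



lemma dcut_real:
  assumes "finite E"
  shows "real (dcut E ends X) = (\<Sum>e\<in>E. of_bool (card (ends e \<inter> X) = 1))"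
proof -
  have "real (dcut E ends X) = (\<Sum>e\<in>{e\<in>E. card (ends e \<inter> X) = 1}. 1)"
    unfolding dcut_def by simp
  also have "\<dots> = (\<Sum>e\<in>E. of_bool (card (ends e \<inter> X) = 1))"
    using sum.inter_filter[OF assms, of "\<lambda>_. 1::real" "\<lambda>e. card (ends e \<inter> X) = 1"]
    by (simp add: of_bool_def)
  finally show ?thesis .
qed

lemma card_edge: "u \<noteq> v \<Longrightarrow> (card ({u,v} \<inter> X) = 1) = ((u\<in>X) \<noteq> (v\<in>X))"
  by (cases "u \<in> X"; cases "v \<in> X") auto

lemma edge_ends:
  assumes "multigraph V E ends" "e \<in> E"
  obtains u v where "u \<noteq> v" "ends e = {u,v}"
  using assms unfolding multigraph_def by (metis card_2_iff)

lemma submod: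
  assumes "multigraph V E ends"
  shows "dcut E ends (X \<inter> Y) + dcut E ends (X \<union> Y) \<le> dcut E ends X + dcut E ends Y"
proof -
  have fin: "finite E" using assms unfolding multigraph_def by auto
  have "(\<Sum>e\<in>E. of_bool (card (ends e \<inter> (X\<inter>Y)) = 1) + of_bool (card (ends e \<inter> (X\<union>Y)) = 1))
     \<le> (\<Sum>e\<in>E. of_bool (card (ends e \<inter> X) = 1) + (of_bool (card (ends e \<inter> Y) = 1)::real))"
  proof (rule sum_mono)
    fix e assume "e \<in> E"
    then obtain u v where uv: "u \<noteq> v" "ends e = {u,v}" using edge_ends assms by metis
    show "of_bool (card (ends e \<inter> (X\<inter>Y)) = 1) + of_bool (card (ends e \<inter> (X\<union>Y)) = 1)
     \<le> of_bool (card (ends e \<inter> X) = 1) + (of_bool (card (ends e \<inter> Y) = 1)::real)"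
      unfolding uv card_edge[OF uv(1)] by auto
  qed
  then have "real (dcut E ends (X \<inter> Y) + dcut E ends (X \<union> Y)) \<le> real (dcut E ends X + dcut E ends Y)"
    by (simp add: dcut_real[OF fin] sum.distrib)
  then show ?thesis by linarith
qed

lemma bisubmod:
  assumes "multigraph V E ends" "A1 \<inter> B1 = {}" "A2 \<inter> B2 = {}"
  shows "dcut E ends (A1 \<inter> A2) + dcut E ends (B1 \<inter> B2)
     + dcut E ends ((A1 \<union> A2) - (B1 \<union> B2)) + dcut E ends ((B1 \<union> B2) - (A1 \<union> A2))
    \<le> dcut E ends A1 + dcut E ends B1 + dcut E ends A2 + dcut E ends B2"
proof -
  have fin: "finite E" using assms unfolding multigraph_def by auto
  let ?h = "\<lambda>e X. (of_bool (card (ends e \<inter> X) = 1)::real)"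
  have "(\<Sum>e\<in>E. ?h e (A1 \<inter> A2) + ?h e (B1 \<inter> B2) + ?h e ((A1 \<union> A2) - (B1 \<union> B2)) + ?h e ((B1 \<union> B2) - (A1 \<union> A2)))
     \<le> (\<Sum>e\<in>E. ?h e A1 + ?h e B1 + ?h e A2 + ?h e B2)"
  proof (rule sum_mono)
    fix e assume "e \<in> E"
    then obtain u v where uv: "u \<noteq> v" "ends e = {u,v}" using edge_ends assms by metis
    show "?h e (A1 \<inter> A2) + ?h e (B1 \<inter> B2) + ?h e ((A1 \<union> A2) - (B1 \<union> B2)) + ?h e ((B1 \<union> B2) - (A1 \<union> A2))
     \<le> ?h e A1 + ?h e B1 + ?h e A2 + ?h e B2"
      unfolding uv card_edge[OF uv(1)] using assms(2,3)
      by (cases "u\<in>A1"; cases "u\<in>A2"; cases "u\<in>B1"; cases "u\<in>B2";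
          cases "v\<in>A1"; cases "v\<in>A2"; cases "v\<in>B1"; cases "v\<in>B2"; simp)
  qed
  then have "real (dcut E ends (A1 \<inter> A2) + dcut E ends (B1 \<inter> B2)
     + dcut E ends ((A1 \<union> A2) - (B1 \<union> B2)) + dcut E ends ((B1 \<union> B2) - (A1 \<union> A2)))
    \<le> real (dcut E ends A1 + dcut E ends B1 + dcut E ends A2 + dcut E ends B2)"
    by (simp add: dcut_real[OF fin] sum.distrib)
  then show ?thesis by linarith
qed

lemma split_sub:
  assumes "card p = 2" "card (p\<inter>A) = 1" "card (p\<inter>B) = 1" "A\<inter>B = {}"
  shows "p \<subseteq> A \<union> B"
proof -
  have fin: "finite p" using assms(1) by (metis card.infinite zero_neq_numeral)
  have "card ((p\<inter>A) \<union> (p\<inter>B)) = 2"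
    using assms fin by (subst card_Un_disjoint) auto
  then have "(p\<inter>A) \<union> (p\<inter>B) = p" using fin assms(1) by (metis Int_Un_distrib card_subset_eq inf_le1)
  then show ?thesis by blast
qed


lemma feas:
  assumes pf: "pair_family V T" and s0: "term_sep V T A0 B0"
    and st: "{s,t} \<in> T" "{s,t} \<inter> (A0 \<union> B0) = {}"
    and ts1: "term_sep V T As Bt" and ts2: "term_sep V T As' Bt'"
    and only1: "\<forall>p\<in>T. p \<inter> (A0 \<union> B0) = {} \<longrightarrow> p \<noteq> {s,t} \<longrightarrow> \<not> p \<subseteq> As \<union> Bt"
    and only2: "\<forall>p\<in>T. p \<inter> (A0 \<union> B0) = {} \<longrightarrow> p \<noteq> {s,t} \<longrightarrow> \<not> p \<subseteq> As' \<union> Bt'"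
    and hA: "A0 \<union> {s} \<subseteq> A" and hB: "B0 \<union> {t} \<subseteq> B" and hAB: "A \<inter> B = {}"
    and hU: "A \<union> B \<subseteq> As \<union> Bt \<union> As' \<union> Bt'"
  shows "term_sep V T A B"
proof -
  have c2: "\<And>p. p \<in> T \<Longrightarrow> card p = 2" using pf unfolding pair_family_def by auto
  have "s \<noteq> t" using c2[OF st(1)] by auto
  have t1: "\<forall>p\<in>T. card (p \<inter> As) = 1 \<and> card (p \<inter> Bt) = 1 \<or> p \<inter> (As \<union> Bt) = {}"
     "As \<inter> Bt = {}" "As \<subseteq> V" "Bt \<subseteq> V" using ts1 unfolding term_sep_def by simp_all
  have t2: "\<forall>p\<in>T. card (p \<inter> As') = 1 \<and> card (p \<inter> Bt') = 1 \<or> p \<inter> (As' \<union> Bt') = {}"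
     "As' \<inter> Bt' = {}" "As' \<subseteq> V" "Bt' \<subseteq> V" using ts2 unfolding term_sep_def by simp_all
  have t0: "\<forall>p\<in>T. card (p \<inter> A0) = 1 \<and> card (p \<inter> B0) = 1 \<or> p \<inter> (A0 \<union> B0) = {}"
     "A0 \<inter> B0 = {}" using s0 unfolding term_sep_def by simp_all
  have disj: "p \<inter> (As \<union> Bt \<union> As' \<union> Bt') = {}"
    if p: "p \<in> T" "p \<inter> (A0 \<union> B0) = {}" "p \<noteq> {s,t}" for p
  proof -
    have "p \<inter> (As \<union> Bt) = {}"
    proof (rule ccontr)
      assume a: "p \<inter> (As \<union> Bt) \<noteq> {}"
      have "card (p \<inter> As) = 1" "card (p \<inter> Bt) = 1" using t1(1) p(1) a by auto
      then have "p \<subseteq> As \<union> Bt" using split_sub[OF c2[OF p(1)] _ _ t1(2)] by simp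
      then show False using only1 p by simp
    qed
    moreover have "p \<inter> (As' \<union> Bt') = {}"
    proof (rule ccontr)
      assume a: "p \<inter> (As' \<union> Bt') \<noteq> {}"
      have "card (p \<inter> As') = 1" "card (p \<inter> Bt') = 1" using t2(1) p(1) a by auto
      then have "p \<subseteq> As' \<union> Bt'" using split_sub[OF c2[OF p(1)] _ _ t2(2)] by simp
      then show False using only2 p by simp
    qed
    ultimately show ?thesis by auto
  qed
  have VV: "A \<subseteq> V" "B \<subseteq> V" using t1 t2 hU by auto
  have main: "card (p \<inter> A) = 1 \<and> card (p \<inter> B) = 1 \<or> p \<inter> (A \<union> B) = {}" if p: "p \<in> T" for p
  proof (cases "p \<inter> (A0 \<union> B0) = {}")
    case True
    show ?thesis
    proof (cases "p = {s,t}")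
      case True
      have "s \<in> A" "t \<in> B" "s \<notin> B" "t \<notin> A" using hA hB hAB by auto
      then have "p \<inter> A = {s}" "p \<inter> B = {t}" using True \<open>s \<noteq> t\<close> by auto
      then show ?thesis by simp
    next
      case False
      have "p \<inter> (A \<union> B) \<subseteq> p \<inter> (As \<union> Bt \<union> As' \<union> Bt')" using hU by auto
      then show ?thesis using disj[OF p True False] by auto
    qed
  next
    case False
    then have cc: "card (p \<inter> A0) = 1" "card (p \<inter> B0) = 1" using t0(1) p by auto
    then have "p \<subseteq> A0 \<union> B0" using split_sub[OF c2[OF p] _ _ t0(2)] by simp
    then have "p \<inter> A = p \<inter> A0" "p \<inter> B = p \<inter> B0" using hA hB hAB by auto
    then show ?thesis using cc by simp
  qed
  show ?thesis unfolding term_sep_def using hAB VV main by simp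
qed

lemma half:
  assumes inst: "ts_instance V E ends T A0 B0 k"
    and st: "{s,t} \<in> T" "{s,t} \<inter> (A0 \<union> B0) = {}"
    and max1: "maximal_sep V E ends T As Bt"
    and min1: "min_ext_sep V E ends T (A0 \<union> {s}) (B0 \<union> {t}) As Bt"
    and max2: "maximal_sep V E ends T As' Bt'"
    and min2: "min_ext_sep V E ends T (A0 \<union> {s}) (B0 \<union> {t}) As' Bt'"
    and only1: "\<forall>p\<in>T. p \<inter> (A0 \<union> B0) = {} \<longrightarrow> p \<noteq> {s,t} \<longrightarrow> \<not> p \<subseteq> As \<union> Bt"
    and only2: "\<forall>p\<in>T. p \<inter> (A0 \<union> B0) = {} \<longrightarrow> p \<noteq> {s,t} \<longrightarrow> \<not> p \<subseteq> As' \<union> Bt'"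
  shows "dcut E ends (As \<inter> As') = dcut E ends As \<and> dcut E ends (Bt \<inter> Bt') = dcut E ends Bt
    \<and> min_ext_sep V E ends T (A0 \<union> {s}) (B0 \<union> {t}) (As \<inter> As') (Bt \<union> Bt')
    \<and> min_ext_sep V E ends T (A0 \<union> {s}) (B0 \<union> {t}) (As \<union> As') (Bt \<inter> Bt')
    \<and> As' \<union> Bt' \<subseteq> As \<union> Bt"
proof -
  have mg: "multigraph V E ends" and pf: "pair_family V T" and s0: "term_sep V T A0 B0"
    using inst unfolding ts_instance_def by auto
  have ts1: "term_sep V T As Bt" and ts2: "term_sep V T As' Bt'"
    using min1 min2 unfolding min_ext_sep_def by auto
  have e1: "A0 \<union> {s} \<subseteq> As" "B0 \<union> {t} \<subseteq> Bt" and e2: "A0 \<union> {s} \<subseteq> As'" "B0 \<union> {t} \<subseteq> Bt'"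
    using min1 min2 unfolding min_ext_sep_def extends_def by auto
  have d1: "As \<inter> Bt = {}" and d2: "As' \<inter> Bt' = {}" using ts1 ts2 unfolding term_sep_def by auto
  note F = feas[OF pf s0 st ts1 ts2 only1 only2]
  define f where "f = (\<lambda>A B. dcut E ends A + dcut E ends B)"
  have cost_f: "cost E ends A B = real (f A B) / 2" for A B unfolding cost_def f_def by simp
  have low: "f As Bt \<le> f A B"
    if "A0 \<union> {s} \<subseteq> A" "B0 \<union> {t} \<subseteq> B" "A \<inter> B = {}" "A \<union> B \<subseteq> As \<union> Bt \<union> As' \<union> Bt'" for A B
  proof -
    have "term_sep V T A B" using F that by blast
    then have "cost E ends As Bt \<le> cost E ends A B"
      using min1 that unfolding min_ext_sep_def extends_def by blast
    then show ?thesis unfolding cost_f by simp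
  qed
  have "f As' Bt' \<le> f As Bt"
  proof -
    have "cost E ends As' Bt' \<le> cost E ends As Bt"
      using min2 ts1 e1 unfolding min_ext_sep_def extends_def by blast
    then show ?thesis unfolding cost_f by simp
  qed
  moreover have "f As Bt \<le> f As' Bt'" using low[of As' Bt'] e2 d2 by blast
  ultimately have eqF: "f As' Bt' = f As Bt" by simp
  have minI: "min_ext_sep V E ends T (A0 \<union> {s}) (B0 \<union> {t}) A B"
    if "A0 \<union> {s} \<subseteq> A" "B0 \<union> {t} \<subseteq> B" "A \<inter> B = {}" "A \<union> B \<subseteq> As \<union> Bt \<union> As' \<union> Bt'"
      "f A B = f As Bt" for A B
  proof -
    have "term_sep V T A B" using F that by blast
    moreover have "cost E ends A B = cost E ends As Bt" unfolding cost_f using that(5) by simp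
    ultimately show ?thesis using min1 that unfolding min_ext_sep_def extends_def by auto
  qed
  have sA: "dcut E ends (As \<inter> As') + dcut E ends (As \<union> As') \<le> dcut E ends As + dcut E ends As'"
    by (rule submod[OF mg])
  have sB: "dcut E ends (Bt \<inter> Bt') + dcut E ends (Bt \<union> Bt') \<le> dcut E ends Bt + dcut E ends Bt'"
    by (rule submod[OF mg])
  have lX: "f As Bt \<le> f (As \<inter> As') (Bt \<union> Bt')" by (rule low) (use e1 e2 d1 d2 in blast)+
  have lY: "f As Bt \<le> f (As \<union> As') (Bt \<inter> Bt')" by (rule low) (use e1 e2 d1 d2 in blast)+
  have fX: "f (As \<inter> As') (Bt \<union> Bt') = f As Bt" and fY: "f (As \<union> As') (Bt \<inter> Bt') = f As Bt"
    using sA sB lX lY eqF unfolding f_def by linarith+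
  have mX: "min_ext_sep V E ends T (A0 \<union> {s}) (B0 \<union> {t}) (As \<inter> As') (Bt \<union> Bt')"
    by (rule minI) (use e1 e2 d1 d2 fX in blast)+
  have mY: "min_ext_sep V E ends T (A0 \<union> {s}) (B0 \<union> {t}) (As \<union> As') (Bt \<inter> Bt')"
    by (rule minI) (use e1 e2 d1 d2 fY in blast)+
  define JA where "JA = (As \<union> As') - (Bt \<union> Bt')"
  define JB where "JB = (Bt \<union> Bt') - (As \<union> As')"
  have bs: "dcut E ends (As \<inter> As') + dcut E ends (Bt \<inter> Bt') + dcut E ends JA + dcut E ends JB
    \<le> dcut E ends As + dcut E ends Bt + dcut E ends As' + dcut E ends Bt'"
    unfolding JA_def JB_def by (rule bisubmod[OF mg d1 d2])
  have lM: "f As Bt \<le> f (As \<inter> As') (Bt \<inter> Bt')" by (rule low) (use e1 e2 d1 d2 in blast)+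
  have lJ: "f As Bt \<le> f JA JB" unfolding JA_def JB_def by (rule low) (use e1 e2 d1 d2 in blast)+
  have fJ: "f JA JB = f As Bt" and fM: "f (As \<inter> As') (Bt \<inter> Bt') = f As Bt"
    using bs lM lJ eqF unfolding f_def by linarith+
  have l1: "f As Bt \<le> f As (Bt \<inter> Bt')" by (rule low) (use e1 e2 d1 d2 in blast)+
  have l2: "f As Bt \<le> f (As \<inter> As') Bt" by (rule low) (use e1 e2 d1 d2 in blast)+
  have dA: "dcut E ends (As \<inter> As') = dcut E ends As" and dB: "dcut E ends (Bt \<inter> Bt') = dcut E ends Bt"
    using l1 l2 fM unfolding f_def by linarith+
  have dJ: "JA \<inter> JB = {}" unfolding JA_def JB_def by blast
  define ZA where "ZA = (As \<union> JA) - (Bt \<union> JB)"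
  define ZB where "ZB = (Bt \<union> JB) - (As \<union> JA)"
  have bs2: "dcut E ends (As \<inter> JA) + dcut E ends (Bt \<inter> JB) + dcut E ends ZA + dcut E ends ZB
    \<le> dcut E ends As + dcut E ends Bt + dcut E ends JA + dcut E ends JB"
    unfolding ZA_def ZB_def by (rule bisubmod[OF mg d1 dJ])
  have lM2: "f As Bt \<le> f (As \<inter> JA) (Bt \<inter> JB)" unfolding JA_def JB_def
    by (rule low) (use e1 e2 d1 d2 in blast)+
  have lZ: "f As Bt \<le> f ZA ZB" unfolding ZA_def ZB_def JA_def JB_def
    by (rule low) (use e1 e2 d1 d2 in blast)+
  have fZ: "f ZA ZB = f As Bt" using bs2 lM2 lZ fJ unfolding f_def by linarith
  have tsZ: "term_sep V T ZA ZB" unfolding ZA_def ZB_def JA_def JB_def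
    by (rule F) (use e1 e2 d1 d2 in blast)+
  have exZ: "extends As Bt ZA ZB" unfolding extends_def ZA_def ZB_def JA_def JB_def using d1 d2 by blast
  have "(ZA, ZB) = (As, Bt)"
  proof (rule ccontr)
    assume "(ZA, ZB) \<noteq> (As, Bt)"
    then have "cost E ends ZA ZB > cost E ends As Bt" using max1 tsZ exZ unfolding maximal_sep_def by blast
    then show False unfolding cost_f using fZ by simp
  qed
  then have "ZA = As" "ZB = Bt" by auto
  then have "As' \<union> Bt' \<subseteq> As \<union> Bt" unfolding ZA_def ZB_def JA_def JB_def using d1 d2 by blast
  then show ?thesis using dA dB mX mY by blast
qed

theorem lemma5p3:
  fixes V :: "'a set" and E :: "'e set" and ends :: "'e \<Rightarrow> 'a set"
    and T :: "'a set set" and A0 B0 As Bt As' Bt' :: "'a set" and s t :: 'a and k :: nat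
  defines "T' \<equiv> {p\<in>T. p \<inter> (A0 \<union> B0) = {}}"
  assumes inst: "ts_instance V E ends T A0 B0 k"
    and st: "{s, t} \<in> T'"
    and max1: "maximal_sep V E ends T As Bt"
    and min1: "min_ext_sep V E ends T (A0 \<union> {s}) (B0 \<union> {t}) As Bt"
    and max2: "maximal_sep V E ends T As' Bt'"
    and min2: "min_ext_sep V E ends T (A0 \<union> {s}) (B0 \<union> {t}) As' Bt'"
    and only1: "\<forall>p\<in>T'. p \<noteq> {s, t} \<longrightarrow> \<not> p \<subseteq> As \<union> Bt"
    and only2: "\<forall>p\<in>T'. p \<noteq> {s, t} \<longrightarrow> \<not> p \<subseteq> As' \<union> Bt'"
  shows "dcut E ends As = dcut E ends As' \<and> dcut E ends Bt = dcut E ends Bt'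
    \<and> min_ext_sep V E ends T (A0 \<union> {s}) (B0 \<union> {t}) (As \<inter> As') (Bt \<union> Bt')
    \<and> min_ext_sep V E ends T (A0 \<union> {s}) (B0 \<union> {t}) (As \<union> As') (Bt \<inter> Bt')
    \<and> As \<union> Bt = As' \<union> Bt'"
proof -
  have st': "{s,t} \<in> T" "{s,t} \<inter> (A0 \<union> B0) = {}" using st unfolding T'_def by auto
  have o1: "\<forall>p\<in>T. p \<inter> (A0 \<union> B0) = {} \<longrightarrow> p \<noteq> {s,t} \<longrightarrow> \<not> p \<subseteq> As \<union> Bt"
    using only1 unfolding T'_def by auto
  have o2: "\<forall>p\<in>T. p \<inter> (A0 \<union> B0) = {} \<longrightarrow> p \<noteq> {s,t} \<longrightarrow> \<not> p \<subseteq> As' \<union> Bt'"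
    using only2 unfolding T'_def by auto
  note h1 = half[OF inst st' max1 min1 max2 min2 o1 o2]
  note h2 = half[OF inst st' max2 min2 max1 min1 o2 o1]
  have "As' \<inter> As = As \<inter> As'" "Bt' \<inter> Bt = Bt \<inter> Bt'" by auto
  then show ?thesis using h1 h2 by (metis Un_commute subset_antisym)
qed

end
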